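(* Let $\varepsilon\in\{\pm1\}$ and let $(c_1,\dots,c_m)\in\mathbb{Z}^m$ be an $\varepsilon$-cycle. Indices are read cyclically modulo $m$. Then at least one of the following holds: (0) $m=2$ and $(c_1,c_2)=(0,0)$; (1) there is $k$ with $c_k=1$ such that $(c_1,\dots,c_{k-2},c_{k-1}-1,c_{k+1}-1,c_{k+2},\dots,c_m)$ is an $\varepsilon$-cycle of length $m-1$; (2) there is $k$ with $c_k=0$ such that $(c_1,\dots,c_{k-2},c_{k-1}+c_{k+1},c_{k+2},\dots,c_m)$ is a $(-\varepsilon)$-cycle of length $m-2$; (3) there is $k$ with $c_k=-1$ such that $(c_1,\dots,c_{k-2},c_{k-1}+1,c_{k+1}+1,c_{k+2},\dots,c_m)$ is a $(-\varepsilon)$-cycle of length $m-1$.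
   Context: $\eta(c)=\begin{pmatrix}c&-1\\1&0\end{pmatrix}$. For $\varepsilon\in\{\pm1\}$, an $\varepsilon$-cycle is a sequence $(c_1,\dots,c_m)\in\mathbb{Z}^m$ with $\eta(c_1)\cdots\eta(c_m)=\varepsilon I$. *)

theory Defs
  imports "HOL-Analysis.Analysis"
begin

definition eta :: "int \<Rightarrow> int^2^2" where
  "eta c = vector [vector [c, -1], vector [1, 0]]"

definition eta_prod :: "int list \<Rightarrow> int^2^2" where
  "eta_prod cs = foldr (\<lambda>c M. eta c ** M) cs (mat 1)"

definition is_cycle :: "int \<Rightarrow> int list \<Rightarrow> bool" where
  "is_cycle e cs \<longleftrightarrow> eta_prod cs = mat e"

text \<open>Cyclic reductions at the (0-based) position k.  With rest = [c_{k+1},...,c_{k-1}]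
  (cyclic, 1-based indices in the comment), the rotated reduced sequence is
  [c_{k+1}+d, c_{k+2},...,c_{k-2}, c_{k-1}+d]; rotating it back gives literally
  (c_1,...,c_{k-2}, c_{k-1}+d, c_{k+1}+d, c_{k+2},...,c_m).\<close>
definition red_pm :: "int \<Rightarrow> int list \<Rightarrow> nat \<Rightarrow> int list" where
  "red_pm d cs k = (let m = length cs; rest = tl (rotate k cs) in
     rotate (m - 1 - k) ((hd rest + d) # butlast (tl rest) @ [last rest + d]))"

text \<open>Literally (c_1,...,c_{k-2}, c_{k-1}+c_{k+1}, c_{k+2},...,c_m), indices cyclic.\<close>
definition red_zero :: "int list \<Rightarrow> nat \<Rightarrow> int list" where
  "red_zero cs k = (let m = length cs; rest = tl (rotate k cs) in
     rotate (m - 1 - k) ((last rest + hd rest) # butlast (tl rest)))"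

end

theory Submission
  imports Defs
begin

lemmas M2 = vec_eq_iff forall_2 matrix_matrix_mult_def sum_2 mat_def eta_def

definition etainv :: "int \<Rightarrow> int^2^2" where
  "etainv c = vector [vector [0, 1], vector [-1, c]]"

lemma eta_inv1: "eta x ** etainv x = mat 1" by (simp add: M2 etainv_def)
lemma eta_inv2: "etainv x ** eta x = mat 1" by (simp add: M2 etainv_def)
lemma mat_comm: "mat (e::int) ** (A::int^2^2) = A ** mat e" by (simp add: M2 algebra_simps)

lemma eta_prod_append: "eta_prod (xs @ ys) = eta_prod xs ** eta_prod ys"
  by (induction xs) (simp_all add: eta_prod_def matrix_mul_assoc matrix_mul_lid)

lemma cycle_rotate1: assumes c: "is_cycle e xs" shows "is_cycle e (rotate1 xs)"
proof (cases xs)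
  case Nil then show ?thesis using c by simp
next
  case (Cons x ys)
  from c have h: "eta x ** eta_prod ys = mat e" using Cons by (simp add: is_cycle_def eta_prod_def)
  have "eta_prod ys = etainv x ** (eta x ** eta_prod ys)"
    by (metis matrix_mul_assoc eta_inv2 matrix_mul_lid)
  also have "\<dots> = etainv x ** mat e" using h by simp
  finally have "eta_prod ys ** eta x = etainv x ** mat e ** eta x" by simp
  also have "\<dots> = etainv x ** (mat e ** eta x)" by (rule matrix_mul_assoc[symmetric])
  also have "\<dots> = etainv x ** (eta x ** mat e)" by (simp only: mat_comm)
  also have "\<dots> = mat e" by (metis matrix_mul_assoc eta_inv2 matrix_mul_lid)
  finally have 1: "eta_prod ys ** eta x = mat e" .
  have "eta_prod (ys @ [x]) = eta_prod ys ** eta x"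
    by (simp only: eta_prod_append) (simp add: eta_prod_def matrix_mul_rid)
  then show ?thesis using Cons 1 by (simp add: is_cycle_def)
qed

lemma cycle_rotate: "is_cycle e xs \<Longrightarrow> is_cycle e (rotate n xs)"
  by (induction n) (simp_all add: cycle_rotate1)

lemma id1: "eta y ** (eta 1 ** (eta x ** A)) = eta (y-1) ** (eta (x-1) ** A)"
proof -
  have H: "eta y ** eta 1 ** eta x = eta (y-1) ** eta (x-1)" by (simp add: M2 algebra_simps)
  have "eta y ** (eta 1 ** (eta x ** A)) = (eta y ** eta 1 ** eta x) ** A" by (simp only: matrix_mul_assoc)
  also have "\<dots> = (eta (y-1) ** eta (x-1)) ** A" by (simp only: H)
  also have "\<dots> = eta (y-1) ** (eta (x-1) ** A)" by (simp only: matrix_mul_assoc)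
  finally show ?thesis .
qed
lemma idm1: "eta y ** (eta (-1) ** (eta x ** A)) = mat (-1) ** (eta (y+1) ** (eta (x+1) ** A))"
proof -
  have H: "eta y ** eta (-1) ** eta x = mat (-1) ** (eta (y+1) ** eta (x+1))" by (simp add: M2 algebra_simps)
  have "eta y ** (eta (-1) ** (eta x ** A)) = (eta y ** eta (-1) ** eta x) ** A" by (simp only: matrix_mul_assoc)
  also have "\<dots> = (mat (-1) ** (eta (y+1) ** eta (x+1))) ** A" by (simp only: H)
  also have "\<dots> = mat (-1) ** (eta (y+1) ** (eta (x+1) ** A))" by (simp only: matrix_mul_assoc)
  finally show ?thesis .
qed
lemma id0: "eta y ** (eta 0 ** (eta x ** A)) = mat (-1) ** (eta (y+x) ** A)"
proof -
  have H: "eta y ** eta 0 ** eta x = mat (-1) ** eta (y+x)" by (simp add: M2 algebra_simps)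
  have "eta y ** (eta 0 ** (eta x ** A)) = (eta y ** eta 0 ** eta x) ** A" by (simp only: matrix_mul_assoc)
  also have "\<dots> = (mat (-1) ** eta (y+x)) ** A" by (simp only: H)
  also have "\<dots> = mat (-1) ** (eta (y+x) ** A)" by (simp only: matrix_mul_assoc)
  finally show ?thesis .
qed
lemma neg_mat: "mat (-1) ** (A::int^2^2) = mat e \<Longrightarrow> A = mat (-e)"
  by (simp add: M2 algebra_simps)

lemma grow: "\<forall>c\<in>set cs. \<bar>c\<bar> \<ge> 2 \<Longrightarrow> \<bar>eta_prod cs $1$1\<bar> > \<bar>eta_prod cs $2$1\<bar>"
proof (induction cs)
  case Nil then show ?case by (simp add: eta_prod_def mat_def)
next
  case (Cons c cs)
  let ?a = "eta_prod cs $1$1" and ?b = "eta_prod cs $2$1"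
  have e: "eta_prod (c#cs) $1$1 = c * ?a - ?b" "eta_prod (c#cs) $2$1 = ?a"
    by (simp_all add: eta_prod_def matrix_matrix_mult_def sum_2 eta_def)
  have h: "\<bar>c\<bar> \<ge> 2" "\<bar>?a\<bar> > \<bar>?b\<bar>" using Cons by auto
  have m: "\<bar>c * ?a\<bar> \<ge> 2 * \<bar>?a\<bar>" using h by (simp add: abs_mult mult_right_mono)
  have t: "\<bar>c * ?a - ?b\<bar> \<ge> \<bar>c * ?a\<bar> - \<bar>?b\<bar>" by (rule abs_triangle_ineq2)
  have "\<bar>c * ?a - ?b\<bar> > \<bar>?a\<bar>" using m t h(2) by linarith
  then show ?case unfolding e .
qed


lemma eta_prod_Cons: "eta_prod (c # cs) = eta c ** eta_prod cs"
  by (simp add: eta_prod_def)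

lemma red_core:
  assumes h: "is_cycle e (c # x # mid @ [y])"
  shows "c = 1 \<Longrightarrow> is_cycle e ((x-1) # mid @ [y-1])"
    and "c = -1 \<Longrightarrow> is_cycle (-e) ((x+1) # mid @ [y+1])"
    and "c = 0 \<Longrightarrow> is_cycle (-e) ((y+x) # mid)"
proof -
  have "rotate (length (c#x#mid)) ((c#x#mid) @ [y]) = [y] @ (c#x#mid)" by (rule rotate_append)
  then have "is_cycle e (y # c # x # mid)" using cycle_rotate[OF h, of "length (c#x#mid)"] by simp
  then have P: "eta y ** (eta c ** (eta x ** eta_prod mid)) = mat e"
    by (simp add: is_cycle_def eta_prod_Cons)
  show "c = 1 \<Longrightarrow> is_cycle e ((x-1) # mid @ [y-1])"
  proof -
    assume "c = 1"
    then have "is_cycle e ((y-1) # (x-1) # mid)" using P by (simp add: id1 is_cycle_def eta_prod_Cons)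
    from cycle_rotate1[OF this] show ?thesis by simp
  qed
  show "c = -1 \<Longrightarrow> is_cycle (-e) ((x+1) # mid @ [y+1])"
  proof -
    assume "c = -1"
    then have "mat (-1) ** eta_prod ((y+1) # (x+1) # mid) = mat e" using P by (simp add: idm1 eta_prod_Cons)
    then have "is_cycle (-e) ((y+1) # (x+1) # mid)" using neg_mat is_cycle_def by blast
    from cycle_rotate1[OF this] show ?thesis by simp
  qed
  show "c = 0 \<Longrightarrow> is_cycle (-e) ((y+x) # mid)"
  proof -
    assume "c = 0"
    then have "mat (-1) ** eta_prod ((y+x) # mid) = mat e" using P by (simp add: id0 eta_prod_Cons)
    then show "is_cycle (-e) ((y+x) # mid)" using neg_mat is_cycle_def by blast
  qed
qed

theorem theorem6p2:
  fixes e :: int and cs :: "int list"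
  assumes "e = 1 \<or> e = -1"
    and "length cs \<ge> 1"
    and "is_cycle e cs"
  shows "(length cs = 2 \<and> cs = [0, 0])
    \<or> (\<exists>k < length cs. cs ! k = 1 \<and> length (red_pm (-1) cs k) = length cs - 1
          \<and> is_cycle e (red_pm (-1) cs k))
    \<or> (\<exists>k < length cs. cs ! k = 0 \<and> length (red_zero cs k) = length cs - 2
          \<and> is_cycle (-e) (red_zero cs k))
    \<or> (\<exists>k < length cs. cs ! k = -1 \<and> length (red_pm 1 cs k) = length cs - 1
          \<and> is_cycle (-e) (red_pm 1 cs k))"
proof -
  define m where "m = length cs"
  have cyc: "eta_prod cs = mat e" using assms(3) by (simp add: is_cycle_def)
  have "m \<noteq> 1"
  proof
    assume "m = 1"
    then obtain c where "cs = [c]" unfolding m_def by (metis One_nat_def length_0_conv length_Suc_conv)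
    then have "eta c = mat e" using cyc by (simp add: eta_prod_def matrix_mul_rid)
    then have "eta c $1$(2::2) = (mat e :: int^2^2) $1$2" by simp
    then show False by (simp add: eta_def mat_def)
  qed
  with assms(2) have m2: "m \<ge> 2" unfolding m_def by linarith
  obtain k where k: "k < m" "\<bar>cs ! k\<bar> \<le> 1"
  proof (rule ccontr)
    assume nt: "\<not> thesis"
    have all: "\<forall>c\<in>set cs. \<bar>c\<bar> \<ge> 2"
    proof
      fix c assume "c \<in> set cs"
      then obtain i where i: "i < m" "cs ! i = c" by (auto simp: in_set_conv_nth m_def)
      have "\<not> \<bar>cs ! i\<bar> \<le> 1" using that[OF i(1)] nt by blast
      then show "\<bar>c\<bar> \<ge> 2" using i(2) by linarith
    qed
    obtain c cs' where cs: "cs = c # cs'" using m2 unfolding m_def by (cases cs) auto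
    have "\<bar>eta_prod cs' $1$1\<bar> > \<bar>eta_prod cs' $2$1\<bar>" using grow all cs by simp
    moreover have "eta_prod cs $2$1 = eta_prod cs' $1$1"
      using cs by (simp add: eta_prod_def matrix_matrix_mult_def sum_2 eta_def)
    ultimately have "eta_prod cs $2$1 \<noteq> 0" by linarith
    then show False using cyc by (simp add: mat_def)
  qed
  show ?thesis
  proof (cases "m = 2")
    case True
    then obtain a b where cs: "cs = [a, b]" unfolding m_def
      by (metis (no_types, opaque_lifting) Suc_1 One_nat_def length_0_conv length_Suc_conv)
    have "eta a ** eta b = mat e" using cyc cs by (simp add: eta_prod_def matrix_mul_rid)
    then have "(eta a ** eta b) $1$(2::2) = (mat e :: int^2^2) $1$2" "(eta a ** eta b) $(2::2)$1 = (mat e :: int^2^2) $2$1" by simp_all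
    then have "a = 0" "b = 0" by (simp_all add: matrix_matrix_mult_def sum_2 eta_def mat_def)
    then show ?thesis using cs by simp
  next
    case False
    with m2 have m3: "m \<ge> 3" by linarith
    define r where "r = rotate k cs"
    define rest where "rest = tl r"
    have lr: "length r = m" by (simp add: r_def m_def)
    have r0: "r ! 0 = cs ! k" using k m3 unfolding r_def m_def by (subst nth_rotate) auto
    have rr: "r = cs ! k # rest" using lr m3 r0 unfolding rest_def by (cases r) auto
    have lrest: "length rest = m - 1" using lr by (simp add: rest_def)
    define x where "x = hd rest"
    define mid where "mid = butlast (tl rest)"
    define y where "y = last rest"
    have rs: "rest = x # mid @ [y]"
    proof -
      obtain u t where ut: "rest = u # t" using lrest m3 by (cases rest) auto
      have "t \<noteq> []" using ut lrest m3 by auto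
      then show ?thesis using ut by (simp add: x_def mid_def y_def)
    qed
    have cr: "is_cycle e (cs ! k # x # mid @ [y])" using cycle_rotate[OF assms(3), of k] rr rs
      by (simp add: r_def)
    have lmid: "length mid = m - 3" using lrest rs by simp
    have pm: "red_pm d cs k = rotate (m - 1 - k) ((x + d) # mid @ [y + d])" for d
      unfolding red_pm_def Let_def m_def[symmetric] rest_def[symmetric] r_def[symmetric]
      by (simp add: x_def y_def mid_def)
    have z: "red_zero cs k = rotate (m - 1 - k) ((y + x) # mid)"
      unfolding red_zero_def Let_def m_def[symmetric] rest_def[symmetric] r_def[symmetric]
      by (simp add: x_def y_def mid_def)
    have c3: "cs ! k = 1 \<or> cs ! k = 0 \<or> cs ! k = -1" using k by linarith
    then show ?thesis
    proof (elim disjE)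
      assume c: "cs ! k = 1"
      have "is_cycle e (red_pm (-1) cs k)" unfolding pm
        using cycle_rotate[OF red_core(1)[OF cr c]] by simp
      moreover have "length (red_pm (-1) cs k) = m - 1" unfolding pm using lmid m3 by simp
      ultimately show ?thesis using c k unfolding m_def by blast
    next
      assume c: "cs ! k = 0"
      have "is_cycle (-e) (red_zero cs k)" unfolding z
        using cycle_rotate[OF red_core(3)[OF cr c]] by simp
      moreover have "length (red_zero cs k) = m - 2" unfolding z using lmid m3 by simp
      ultimately show ?thesis using c k unfolding m_def by blast
    next
      assume c: "cs ! k = -1"
      have "is_cycle (-e) (red_pm 1 cs k)" unfolding pm
        using cycle_rotate[OF red_core(2)[OF cr c]] by simp
      moreover have "length (red_pm 1 cs k) = m - 1" unfolding pm using lmid m3 by simp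
      ultimately show ?thesis using c k unfolding m_def by blast
    qed
  qed
qed

end
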